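(* Let $\Gamma\curvearrowright X$ be an extreme boundary action, and let $U,V\subseteq X$ be non-empty open sets neither of which is dense in $X$. Then the normal closures of $\Gamma_U$ and $\Gamma_V$ in $\Gamma$ coincide and are equal to $\operatorname{int}(\Gamma\curvearrowright X)$. Moreover, $\Gamma_U$ is amenable if and only if $\Gamma_V$ is amenable, and $\Gamma_U$ is trivial if and only if $\Gamma_V$ is trivial.
   Context: An action of a discrete group $\Gamma$ by homeomorphisms on a compact Hausdorff space $X$ with more than two points is an extreme boundary action if for every closed $K\subsetneq X$ and every non-empty open $U\subseteq X$ there is $g\in\Gamma$ with $gK\subseteq U$. $\Gamma_U=\{g\in\Gamma: gx=x\ \forall x\in U\}$; $\Gamma_x^\circ$ is the subgroup of elements fixing pointwise a neighbourhood of $x$; $\operatorname{int}(\Gamma\curvearrowright X)=\langle\Gamma_x^\circ: x\in X\rangle$. *)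

theory Defs
  imports "HOL-Analysis.Analysis" "HOL-Algebra.Group" "HOL-Algebra.Generated_Groups"
begin

text \<open>An action of the (discrete) group G on the space 'x by homeomorphisms.
  Each phi g is continuous, and the action axioms make phi (inv g) its inverse.\<close>
definition homeo_action :: "('g, 'b) monoid_scheme \<Rightarrow> ('g \<Rightarrow> 'x::topological_space \<Rightarrow> 'x) \<Rightarrow> bool" where
  "homeo_action G phi \<longleftrightarrow> group G \<and> phi \<one>\<^bsub>G\<^esub> = id
     \<and> (\<forall>g\<in>carrier G. \<forall>h\<in>carrier G. phi (g \<otimes>\<^bsub>G\<^esub> h) = phi g \<circ> phi h)
     \<and> (\<forall>g\<in>carrier G. continuous_on UNIV (phi g))"

definition extreme_boundary_action :: "('g, 'b) monoid_scheme \<Rightarrow> ('g \<Rightarrow> 'x::topological_space \<Rightarrow> 'x) \<Rightarrow> bool" where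
  "extreme_boundary_action G phi \<longleftrightarrow>
     (\<forall>K U. closed K \<and> K \<noteq> UNIV \<and> open U \<and> U \<noteq> {} \<longrightarrow> (\<exists>g\<in>carrier G. phi g ` K \<subseteq> U))"

definition rigid_stab :: "('g, 'b) monoid_scheme \<Rightarrow> ('g \<Rightarrow> 'x \<Rightarrow> 'x) \<Rightarrow> 'x set \<Rightarrow> 'g set" where
  "rigid_stab G phi U = {g \<in> carrier G. \<forall>x\<in>U. phi g x = x}"

definition germ_stab :: "('g, 'b) monoid_scheme \<Rightarrow> ('g \<Rightarrow> 'x::topological_space \<Rightarrow> 'x) \<Rightarrow> 'x \<Rightarrow> 'g set" where
  "germ_stab G phi x = {g \<in> carrier G. \<exists>W. open W \<and> x \<in> W \<and> (\<forall>y\<in>W. phi g y = y)}"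

definition int_action :: "('g, 'b) monoid_scheme \<Rightarrow> ('g \<Rightarrow> 'x::topological_space \<Rightarrow> 'x) \<Rightarrow> 'g set" where
  "int_action G phi = generate G (\<Union>x. germ_stab G phi x)"

definition normal_closure :: "('g, 'b) monoid_scheme \<Rightarrow> 'g set \<Rightarrow> 'g set" where
  "normal_closure G H = generate G {g \<otimes>\<^bsub>G\<^esub> h \<otimes>\<^bsub>G\<^esub> inv\<^bsub>G\<^esub> g | g h. g \<in> carrier G \<and> h \<in> H}"

definition amenable :: "('g, 'b) monoid_scheme \<Rightarrow> bool" where
  "amenable G \<longleftrightarrow> (\<exists>\<mu> :: 'g set \<Rightarrow> real.
      (\<forall>A. A \<subseteq> carrier G \<longrightarrow> \<mu> A \<ge> 0)
    \<and> \<mu> (carrier G) = 1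
    \<and> (\<forall>A B. A \<subseteq> carrier G \<longrightarrow> B \<subseteq> carrier G \<longrightarrow> A \<inter> B = {} \<longrightarrow> \<mu> (A \<union> B) = \<mu> A + \<mu> B)
    \<and> (\<forall>g\<in>carrier G. \<forall>A. A \<subseteq> carrier G \<longrightarrow> \<mu> ((\<lambda>a. g \<otimes>\<^bsub>G\<^esub> a) ` A) = \<mu> A))"

end

theory Submission
  imports Defs
begin

lemma (in group) ha_group: "homeo_action G phi \<Longrightarrow> group G"
  by (simp add: homeo_action_def)

lemma (in group) ha_mult: "homeo_action G phi \<Longrightarrow> g \<in> carrier G \<Longrightarrow> h \<in> carrier G \<Longrightarrow> phi (g \<otimes>\<^bsub>G\<^esub> h) x = phi g (phi h x)"
  by (simp add: homeo_action_def)

lemma (in group) ha_one: "homeo_action G phi \<Longrightarrow> phi \<one>\<^bsub>G\<^esub> x = x"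
  by (simp add: homeo_action_def)

lemma (in group) ha_inv1: "homeo_action G phi \<Longrightarrow> g \<in> carrier G \<Longrightarrow> phi g (phi (inv\<^bsub>G\<^esub> g) x) = x"
proof -
  assume a: "homeo_action G phi" "g \<in> carrier G"
  have "phi g (phi (inv g) x) = phi (g \<otimes> inv g) x" using ha_mult[OF a(1) a(2) inv_closed[OF a(2)]] by simp
  then show ?thesis using a by (simp add: ha_one del: r_inv l_inv)
qed

lemma (in group) ha_inv2: "homeo_action G phi \<Longrightarrow> g \<in> carrier G \<Longrightarrow> phi (inv\<^bsub>G\<^esub> g) (phi g x) = x"
proof -
  assume a: "homeo_action G phi" "g \<in> carrier G"
  have "phi (inv g) (phi g x) = phi (inv g \<otimes> g) x" using ha_mult[OF a(1) inv_closed[OF a(2)] a(2)] by simp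
  then show ?thesis using a by (simp add: ha_one del: r_inv l_inv)
qed

lemma (in group) ha_cont: "homeo_action G phi \<Longrightarrow> g \<in> carrier G \<Longrightarrow> continuous_on UNIV (phi g)"
  by (simp add: homeo_action_def)

lemma (in group) conj_into:
  fixes phi :: "'a \<Rightarrow> 'x::topological_space \<Rightarrow> 'x"
  assumes ha: "homeo_action G phi" and eb: "extreme_boundary_action G phi"
    and W: "open W" "W \<noteq> {}" and U: "closure U \<noteq> UNIV"
  shows "\<exists>g\<in>carrier G. \<forall>h\<in>rigid_stab G phi W. g \<otimes>\<^bsub>G\<^esub> h \<otimes>\<^bsub>G\<^esub> inv\<^bsub>G\<^esub> g \<in> rigid_stab G phi U"
proof -
  have "closed (- W)" using W by auto
  moreover have "- W \<noteq> UNIV" using W by auto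
  moreover have "open (- closure U)" by auto
  moreover have "- closure U \<noteq> {}" using U by auto
  ultimately obtain g where g: "g \<in> carrier G" "phi g ` (- W) \<subseteq> - closure U"
    using eb unfolding extreme_boundary_action_def by blast
  have "g \<otimes> h \<otimes> inv g \<in> rigid_stab G phi U" if h: "h \<in> rigid_stab G phi W" for h
  proof -
    have hc: "h \<in> carrier G" using h by (simp add: rigid_stab_def)
    have "phi (g \<otimes> h \<otimes> inv g) u = u" if u: "u \<in> U" for u
    proof -
      have yW: "phi (inv g) u \<in> W"
      proof (rule ccontr)
        assume "phi (inv g) u \<notin> W"
        then have "phi g (phi (inv g) u) \<in> - closure U" using g by blast
        then show False using u ha_inv1[OF ha g(1)] closure_subset by auto
      qed
      have "phi (g \<otimes> h \<otimes> inv g) u = phi g (phi h (phi (inv g) u))"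
        using ha g hc by (simp add: ha_mult)
      also have "\<dots> = phi g (phi (inv g) u)" using h yW by (simp add: rigid_stab_def)
      also have "\<dots> = u" using ha_inv1[OF ha g(1)] .
      finally show ?thesis .
    qed
    then show ?thesis using g hc by (simp add: rigid_stab_def)
  qed
  then show ?thesis using g by blast
qed

lemma (in group) canc1: "x \<in> carrier G \<Longrightarrow> y \<in> carrier G \<Longrightarrow> inv x \<otimes> (x \<otimes> y) = y"
  by (simp add: m_assoc[symmetric])
lemma (in group) canc2: "x \<in> carrier G \<Longrightarrow> y \<in> carrier G \<Longrightarrow> x \<otimes> (inv x \<otimes> y) = y"
  by (simp add: m_assoc[symmetric])

lemma (in group) rigid_sub: "homeo_action G phi \<Longrightarrow> subgroup (rigid_stab G phi U) G"
proof -
  assume ha: "homeo_action G phi"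
  show ?thesis
  proof (rule subgroupI)
    show "rigid_stab G phi U \<subseteq> carrier G" by (auto simp: rigid_stab_def)
    show "rigid_stab G phi U \<noteq> {}" using ha_one[OF ha] by (auto simp: rigid_stab_def)
    fix a b assume a: "a \<in> rigid_stab G phi U" and b: "b \<in> rigid_stab G phi U"
    show "inv a \<in> rigid_stab G phi U"
    proof -
      have "phi (inv a) x = x" if "x \<in> U" for x
        using ha_inv2[OF ha, of a x] a that by (auto simp: rigid_stab_def)
      then show ?thesis using a by (auto simp: rigid_stab_def)
    qed
    show "a \<otimes> b \<in> rigid_stab G phi U"
      using a b ha_mult[OF ha] by (auto simp: rigid_stab_def)
  qed
qed

lemma (in group) nc_eq_int:
  fixes phi :: "'a \<Rightarrow> 'x::topological_space \<Rightarrow> 'x"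
  assumes ha: "homeo_action G phi" and eb: "extreme_boundary_action G phi"
    and U: "open U" "U \<noteq> {}" "closure U \<noteq> UNIV"
  shows "normal_closure G (rigid_stab G phi U) = int_action G phi"
proof -
  let ?C = "{g \<otimes> h \<otimes> inv g | g h. g \<in> carrier G \<and> h \<in> rigid_stab G phi U}"
  have "?C \<subseteq> (\<Union>x. germ_stab G phi x)"
  proof
    fix c assume "c \<in> ?C"
    then obtain g h where c: "c = g \<otimes> h \<otimes> inv g" and g: "g \<in> carrier G"
      and h: "h \<in> rigid_stab G phi U" by blast
    have hc: "h \<in> carrier G" using h by (simp add: rigid_stab_def)
    obtain x where x: "x \<in> U" using U by auto
    let ?W = "phi (inv g) -` U"
    have "open (phi (inv g) -` U \<inter> UNIV)"
      using ha_cont[OF ha inv_closed[OF g]] U(1) continuous_on_open_vimage[OF open_UNIV] by blast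
    then have oW: "open ?W" by simp
    have xW: "phi g x \<in> ?W" using ha_inv2[OF ha g] x by simp
    have "phi c y = y" if y: "y \<in> ?W" for y
    proof -
      have "phi c y = phi g (phi h (phi (inv g) y))" using c g hc ha_mult[OF ha] by simp
      also have "\<dots> = phi g (phi (inv g) y)" using h y by (simp add: rigid_stab_def)
      also have "\<dots> = y" using ha_inv1[OF ha g] .
      finally show ?thesis .
    qed
    moreover have "c \<in> carrier G" using c g hc by simp
    ultimately have "c \<in> germ_stab G phi (phi g x)" using oW xW unfolding germ_stab_def by blast
    then show "c \<in> (\<Union>x. germ_stab G phi x)" by blast
  qed
  moreover have "(\<Union>x. germ_stab G phi x) \<subseteq> ?C"
  proof
    fix h assume "h \<in> (\<Union>x. germ_stab G phi x)"
    then obtain x W where hc: "h \<in> carrier G" and W: "open W" "x \<in> W" "\<forall>y\<in>W. phi h y = y"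
      unfolding germ_stab_def by blast
    have hW: "h \<in> rigid_stab G phi W" using hc W by (simp add: rigid_stab_def)
    obtain g where g: "g \<in> carrier G"
      and gc: "\<forall>h\<in>rigid_stab G phi W. g \<otimes> h \<otimes> inv g \<in> rigid_stab G phi U"
      using conj_into[OF ha eb W(1) _ U(3)] W(2) by blast
    have "h = inv g \<otimes> (g \<otimes> h \<otimes> inv g) \<otimes> inv (inv g)"
      using g hc by (simp add: m_assoc canc1)
    then show "h \<in> ?C" using gc hW g by blast
  qed
  ultimately show ?thesis unfolding normal_closure_def int_action_def
    using mono_generate by blast
qed

lemma (in group) amen_transfer:
  assumes grp: "group G" and g: "g \<in> carrier G" and H: "subgroup H G" and K: "subgroup K G"
    and into: "\<forall>h\<in>H. g \<otimes>\<^bsub>G\<^esub> h \<otimes>\<^bsub>G\<^esub> inv\<^bsub>G\<^esub> g \<in> K" and am: "amenable (G\<lparr>carrier := K\<rparr>)"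
  shows "amenable (G\<lparr>carrier := H\<rparr>)"
proof -
  obtain \<mu> :: "'a set \<Rightarrow> real" where
    m1: "\<forall>A. A \<subseteq> K \<longrightarrow> \<mu> A \<ge> 0" and m2: "\<mu> K = 1"
    and m3: "\<forall>A B. A \<subseteq> K \<longrightarrow> B \<subseteq> K \<longrightarrow> A \<inter> B = {} \<longrightarrow> \<mu> (A \<union> B) = \<mu> A + \<mu> B"
    and m4: "\<forall>k\<in>K. \<forall>A. A \<subseteq> K \<longrightarrow> \<mu> ((\<lambda>a. k \<otimes> a) ` A) = \<mu> A"
    using am unfolding amenable_def by auto
  have Hc: "H \<subseteq> carrier G" and Kc: "K \<subseteq> carrier G"
    using H K subgroup.subset by blast+
  define psi where "psi x = g \<otimes> x \<otimes> inv g" for x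
  define psi' where "psi' x = inv g \<otimes> x \<otimes> g" for x
  define P where "P = psi ` H"
  have psi_mult: "psi (x \<otimes> y) = psi x \<otimes> psi y" if "x \<in> carrier G" "y \<in> carrier G" for x y
    using that g by (simp add: psi_def m_assoc canc1)
  have psi'_mult: "psi' (x \<otimes> y) = psi' x \<otimes> psi' y" if "x \<in> carrier G" "y \<in> carrier G" for x y
    using that g by (simp add: psi'_def m_assoc canc2)
  have psi'_psi: "psi' (psi x) = x" if "x \<in> carrier G" for x
    using that g by (simp add: psi_def psi'_def m_assoc canc1)
  have psi_c: "psi x \<in> carrier G" if "x \<in> carrier G" for x using that g by (simp add: psi_def)
  have psi'_c: "psi' x \<in> carrier G" if "x \<in> carrier G" for x using that g by (simp add: psi'_def)
  have psi_inv: "psi (inv x) = inv (psi x)" if x: "x \<in> carrier G" for x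
  proof -
    have "psi (inv x) \<otimes> psi x = \<one>"
      using psi_mult[of "inv x" x] x g by (simp add: psi_def)
    then show ?thesis using x psi_c by (metis inv_closed inv_equality)
  qed
  have PK: "P \<subseteq> K" using into by (auto simp: P_def psi_def)
  have Pc: "P \<subseteq> carrier G" using PK Kc by blast
  have PH: "p \<in> P \<Longrightarrow> psi' p \<in> H" for p using Hc psi'_psi by (auto simp: P_def)
  have Pm: "x \<in> P \<Longrightarrow> y \<in> P \<Longrightarrow> x \<otimes> y \<in> P" for x y
    using psi_mult Hc subgroup.m_closed[OF H] by (auto simp: P_def) (metis subsetD image_eqI)
  have Pi: "x \<in> P \<Longrightarrow> inv x \<in> P" for x
    using psi_inv Hc subgroup.m_inv_closed[OF H] by (auto simp: P_def) (metis subsetD image_eqI)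
  have P1: "\<one> \<in> P"
    using subgroup.one_closed[OF H] g by (auto simp: P_def psi_def intro!: image_eqI[of _ _ \<one>])
  have Pcanc: "p \<otimes> x \<in> P \<longleftrightarrow> x \<in> P" if p: "p \<in> P" and x: "x \<in> carrier G" for p x
  proof
    assume "p \<otimes> x \<in> P"
    then have "inv p \<otimes> (p \<otimes> x) \<in> P" using Pm Pi p by blast
    then show "x \<in> P" using canc1 p x Pc by auto
  qed (use Pm p in blast)
  define rep where "rep k = (SOME t. t \<in> K \<and> k \<otimes> inv t \<in> P)" for k
  have rep: "rep k \<in> K \<and> k \<otimes> inv (rep k) \<in> P" if k: "k \<in> K" for k
  proof -
    have "k \<in> K \<and> k \<otimes> inv k \<in> P" using k Kc P1 by auto
    then show ?thesis unfolding rep_def by (rule someI)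
  qed
  have rep_mult: "rep (p \<otimes> k) = rep k" if p: "p \<in> P" and k: "k \<in> K" for p k
  proof -
    have "(\<lambda>t. t \<in> K \<and> p \<otimes> k \<otimes> inv t \<in> P) = (\<lambda>t. t \<in> K \<and> k \<otimes> inv t \<in> P)"
    proof (rule ext)
      fix t show "(t \<in> K \<and> p \<otimes> k \<otimes> inv t \<in> P) = (t \<in> K \<and> k \<otimes> inv t \<in> P)"
      proof (cases "t \<in> K")
        case True
        then have c: "k \<otimes> inv t \<in> carrier G" "p \<in> carrier G" "k \<in> carrier G" "inv t \<in> carrier G"
          using p k Kc Pc by auto
        then have "p \<otimes> k \<otimes> inv t = p \<otimes> (k \<otimes> inv t)" by (simp add: m_assoc)
        then show ?thesis using Pcanc[OF p c(1)] True by simp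
      qed simp
    qed
    then show ?thesis unfolding rep_def by simp
  qed
  define q where "q k = psi' (k \<otimes> inv (rep k))" for k
  have qH: "q k \<in> H" if "k \<in> K" for k using rep[OF that] PH by (simp add: q_def)
  have q_mult: "q (p \<otimes> k) = psi' p \<otimes> q k" if p: "p \<in> P" and k: "k \<in> K" for p k
  proof -
    have "q (p \<otimes> k) = psi' (p \<otimes> (k \<otimes> inv (rep k)))"
    proof -
      have "p \<in> carrier G" "k \<in> carrier G" "rep k \<in> carrier G" using p k Pc Kc rep[OF k] by auto
      then show ?thesis using rep_mult[OF p k] by (simp add: q_def m_assoc)
    qed
    also have "\<dots> = psi' p \<otimes> q k"
      using psi'_mult p k Pc Kc rep[OF k] by (simp add: q_def subsetD)
    finally show ?thesis .
  qed
  define \<nu> where "\<nu> A = \<mu> {k \<in> K. q k \<in> A}" for A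
  have "\<forall>A. A \<subseteq> H \<longrightarrow> \<nu> A \<ge> 0" using m1 by (simp add: \<nu>_def)
  moreover have "\<nu> H = 1"
  proof -
    have "{k \<in> K. q k \<in> H} = K" using qH by auto
    then show ?thesis using m2 by (simp add: \<nu>_def)
  qed
  moreover have "\<forall>A B. A \<subseteq> H \<longrightarrow> B \<subseteq> H \<longrightarrow> A \<inter> B = {} \<longrightarrow> \<nu> (A \<union> B) = \<nu> A + \<nu> B"
  proof (intro allI impI)
    fix A B :: "'a set" assume "A \<inter> B = {}"
    then have "{k \<in> K. q k \<in> A \<union> B} = {k \<in> K. q k \<in> A} \<union> {k \<in> K. q k \<in> B}"
      "{k \<in> K. q k \<in> A} \<inter> {k \<in> K. q k \<in> B} = {}" by auto
    then show "\<nu> (A \<union> B) = \<nu> A + \<nu> B" using m3 unfolding \<nu>_def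
      by (metis (no_types, lifting) mem_Collect_eq subsetI)
  qed
  moreover have "\<forall>h\<in>H. \<forall>A. A \<subseteq> H \<longrightarrow> \<nu> ((\<lambda>a. h \<otimes> a) ` A) = \<nu> A"
  proof (intro ballI allI impI)
    fix h A assume h: "h \<in> H" and A: "A \<subseteq> H"
    have hc: "h \<in> carrier G" using h Hc by blast
    have ph: "psi h \<in> P" using h by (simp add: P_def)
    have phK: "psi h \<in> K" using ph PK by blast
    have "{k \<in> K. q k \<in> (\<lambda>a. h \<otimes> a) ` A} = (\<lambda>a. psi h \<otimes> a) ` {k \<in> K. q k \<in> A}"
    proof
      show "(\<lambda>a. psi h \<otimes> a) ` {k \<in> K. q k \<in> A} \<subseteq> {k \<in> K. q k \<in> (\<lambda>a. h \<otimes> a) ` A}"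
      proof clarify
        fix k assume k: "k \<in> K" "q k \<in> A"
        have "q (psi h \<otimes> k) = h \<otimes> q k" using q_mult[OF ph k(1)] psi'_psi hc by simp
        then show "psi h \<otimes> k \<in> K \<and> q (psi h \<otimes> k) \<in> (\<lambda>a. h \<otimes> a) ` A"
          using k phK subgroup.m_closed[OF K] by auto
      qed
      show "{k \<in> K. q k \<in> (\<lambda>a. h \<otimes> a) ` A} \<subseteq> (\<lambda>a. psi h \<otimes> a) ` {k \<in> K. q k \<in> A}"
      proof clarify
        fix k a assume k: "k \<in> K" and a: "a \<in> A" and qk: "q k = h \<otimes> a"
        have ac: "a \<in> carrier G" using a A Hc by blast
        have ip: "inv (psi h) \<in> P" using Pi ph by blast
        have k0: "inv (psi h) \<otimes> k \<in> K" using ip PK k subgroup.m_closed[OF K] by blast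
        have "psi' (inv (psi h)) = inv h" using psi_inv[OF hc] psi'_psi hc by (metis inv_closed)
        then have "q (inv (psi h) \<otimes> k) = inv h \<otimes> (h \<otimes> a)" using q_mult[OF ip k] qk by simp
        also have "\<dots> = a" using hc ac canc1 by simp
        finally have "q (inv (psi h) \<otimes> k) = a" .
        moreover have "k = psi h \<otimes> (inv (psi h) \<otimes> k)" using canc2[of "psi h" k] ph Pc k Kc by (simp add: subsetD)
        ultimately show "k \<in> (\<lambda>a. psi h \<otimes> a) ` {k \<in> K. q k \<in> A}" using k0 a by blast
      qed
    qed
    then show "\<nu> ((\<lambda>a. h \<otimes> a) ` A) = \<nu> A" using m4 phK unfolding \<nu>_def
      by (metis (no_types, lifting) mem_Collect_eq subsetI)
  qed
  ultimately show ?thesis unfolding amenable_def by (intro exI[of _ \<nu>]) simp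
qed

lemma (in group) conj_one: "g \<in> carrier G \<Longrightarrow> h \<in> carrier G \<Longrightarrow> g \<otimes> h \<otimes> inv g = \<one> \<Longrightarrow> h = \<one>"
proof -
  assume a: "g \<in> carrier G" "h \<in> carrier G" "g \<otimes> h \<otimes> inv g = \<one>"
  have "h = inv g \<otimes> (g \<otimes> h \<otimes> inv g) \<otimes> g" using a(1,2) by (simp add: m_assoc canc1)
  also have "\<dots> = \<one>" using a by simp
  finally show ?thesis .
qed

lemma (in group) triv_transfer:
  assumes g: "g \<in> carrier G" and H: "subgroup H G" and into: "\<forall>h\<in>H. g \<otimes> h \<otimes> inv g \<in> K"
    and K1: "K = {\<one>}"
  shows "H = {\<one>}"
proof -
  have "h = \<one>" if "h \<in> H" for h
    using conj_one[OF g _] into K1 that subgroup.subset[OF H] by blast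
  then show ?thesis using subgroup.one_closed[OF H] by blast
qed

theorem mainTheorem6:
  fixes G :: "('g, 'b) monoid_scheme"
    and phi :: "'g \<Rightarrow> 'x::t2_space \<Rightarrow> 'x"
    and U V :: "'x set"
  assumes "compact (UNIV :: 'x set)"
    and "\<exists>a b c :: 'x. a \<noteq> b \<and> a \<noteq> c \<and> b \<noteq> c"
    and "homeo_action G phi"
    and "extreme_boundary_action G phi"
    and "open U" "U \<noteq> {}" "closure U \<noteq> UNIV"
    and "open V" "V \<noteq> {}" "closure V \<noteq> UNIV"
  shows "normal_closure G (rigid_stab G phi U) = normal_closure G (rigid_stab G phi V)
       \<and> normal_closure G (rigid_stab G phi U) = int_action G phi
       \<and> (amenable (G\<lparr>carrier := rigid_stab G phi U\<rparr>) \<longleftrightarrow> amenable (G\<lparr>carrier := rigid_stab G phi V\<rparr>))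
       \<and> (rigid_stab G phi U = {\<one>\<^bsub>G\<^esub>} \<longleftrightarrow> rigid_stab G phi V = {\<one>\<^bsub>G\<^esub>})"
proof -
  have grp: "group G" using assms(3) by (simp add: homeo_action_def)
  have nU: "normal_closure G (rigid_stab G phi U) = int_action G phi"
    using group.nc_eq_int[OF grp assms(3) assms(4) assms(5-7)] .
  have nV: "normal_closure G (rigid_stab G phi V) = int_action G phi"
    using group.nc_eq_int[OF grp assms(3) assms(4) assms(8-10)] .
  obtain g1 where g1: "g1 \<in> carrier G"
    "\<forall>h\<in>rigid_stab G phi V. g1 \<otimes>\<^bsub>G\<^esub> h \<otimes>\<^bsub>G\<^esub> inv\<^bsub>G\<^esub> g1 \<in> rigid_stab G phi U"
    using group.conj_into[OF grp assms(3) assms(4) assms(8,9) assms(7)] by blast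
  obtain g2 where g2: "g2 \<in> carrier G"
    "\<forall>h\<in>rigid_stab G phi U. g2 \<otimes>\<^bsub>G\<^esub> h \<otimes>\<^bsub>G\<^esub> inv\<^bsub>G\<^esub> g2 \<in> rigid_stab G phi V"
    using group.conj_into[OF grp assms(3) assms(4) assms(5,6) assms(10)] by blast
  have sU: "subgroup (rigid_stab G phi U) G" using group.rigid_sub[OF grp assms(3)] .
  have sV: "subgroup (rigid_stab G phi V) G" using group.rigid_sub[OF grp assms(3)] .
  have am: "amenable (G\<lparr>carrier := rigid_stab G phi U\<rparr>) \<longleftrightarrow> amenable (G\<lparr>carrier := rigid_stab G phi V\<rparr>)"
    using group.amen_transfer[OF grp grp g1(1) sV sU g1(2)] group.amen_transfer[OF grp grp g2(1) sU sV g2(2)]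
    by blast
  have tr: "rigid_stab G phi U = {\<one>\<^bsub>G\<^esub>} \<longleftrightarrow> rigid_stab G phi V = {\<one>\<^bsub>G\<^esub>}"
    using group.triv_transfer[OF grp g1(1) sV g1(2)] group.triv_transfer[OF grp g2(1) sU g2(2)]
    by blast
  show ?thesis using nU nV am tr by simp
qed

end
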